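(* Let $\mathbb{G},\mathbb{M}$ be graded groups, $L:\mathbb{G}\to\mathbb{M}$ a surjective h-homomorphism and $N$ its kernel. The following are equivalent: (1) there exists a homogeneous subgroup $H$ of $\mathbb{G}$ complementary to $N$; (2) $L$ is an h-epimorphism. Moreover, if $H$ is a homogeneous subgroup complementary to $N$, then the restriction $L|_H:H\to\mathbb{M}$ is an h-isomorphism.
   Context: Graded group: connected simply connected real Lie group with Lie algebra $V_1\oplus\cdots\oplus V_\iota$, $[V_i,V_j]\subset V_{i+j}$; dilations act by $r^i$ on $V_i$. h-homomorphism: group homomorphism commuting with dilations; h-isomorphism: invertible h-homomorphism; h-epimorphism: h-homomorphism admitting a right inverse that is an h-homomorphism. Homogeneous subgroup: closed connected simply connected Lie subgroup invariant under all dilations. $N,H$ complementary: $NH=\mathbb{G}$ and $N\cap H=\{e\}$. *)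

theory Defs
  imports "HOL-Analysis.Analysis" "HOL-Algebra.Coset"
begin

primrec Ck :: "nat \<Rightarrow> ('a::euclidean_space \<Rightarrow> 'b::real_normed_vector) \<Rightarrow> bool" where
  "Ck 0 f = continuous_on UNIV f"
| "Ck (Suc k) f = ((\<forall>x. f differentiable (at x)) \<and>
                   (\<forall>v. Ck k (\<lambda>x. frechet_derivative f (at x) v)))"

definition smooth :: "('a::euclidean_space \<Rightarrow> 'b::real_normed_vector) \<Rightarrow> bool" where
  "smooth f \<longleftrightarrow> (\<forall>k. Ck k f)"

record 'a dil_group = "'a monoid" +
  dil :: "real \<Rightarrow> 'a \<Rightarrow> 'a"

text \<open>Graded group, in exponential coordinates: the underlying manifold is the
  finite-dimensional real vector space 'a (the Lie algebra), the group law and the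
  inversion are smooth (so we have a connected, simply connected Lie group), the
  Lie algebra 'a splits as V_1 + ... + V_iota (direct sum of linear subspaces), and
  the dilation dil r is the linear map acting by r^i on V_i; dilations are group
  automorphisms (equivalently the Lie bracket satisfies [V_i,V_j] \<subseteq> V_(i+j)).\<close>

definition graded_group :: "('a::euclidean_space) dil_group \<Rightarrow> bool" where
  "graded_group G \<longleftrightarrow>
     group G \<and> carrier G = UNIV \<and>
     smooth (\<lambda>(x, y). x \<otimes>\<^bsub>G\<^esub> y) \<and> smooth (\<lambda>x. inv\<^bsub>G\<^esub> x) \<and>
     (\<exists>(\<iota>::nat) (V :: nat \<Rightarrow> 'a set).
        (\<forall>i\<in>{1..\<iota>}. subspace (V i)) \<and>
        (\<forall>x. \<exists>!v. (\<forall>i. (i \<in> {1..\<iota>} \<longrightarrow> v i \<in> V i) \<and> (i \<notin> {1..\<iota>} \<longrightarrow> v i = 0))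
                  \<and> x = (\<Sum>i=1..\<iota>. v i)) \<and>
        (\<forall>r>0. linear (dil G r) \<and> (\<forall>i\<in>{1..\<iota>}. \<forall>v\<in>V i. dil G r v = r ^ i *\<^sub>R v))) \<and>
     (\<forall>r>0. dil G r \<in> hom G G)"

definition h_hom :: "('a, 'c) dil_group_scheme \<Rightarrow> ('b, 'd) dil_group_scheme \<Rightarrow> ('a \<Rightarrow> 'b) \<Rightarrow> bool" where
  "h_hom G M f \<longleftrightarrow> f \<in> hom G M \<and>
     (\<forall>r>0. \<forall>x\<in>carrier G. f (dil G r x) = dil M r (f x))"

definition h_iso :: "('a, 'c) dil_group_scheme \<Rightarrow> ('b, 'd) dil_group_scheme \<Rightarrow> ('a \<Rightarrow> 'b) \<Rightarrow> bool" where
  "h_iso G M f \<longleftrightarrow> h_hom G M f \<and>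
     (\<exists>g. h_hom M G g \<and> (\<forall>x\<in>carrier G. g (f x) = x) \<and> (\<forall>y\<in>carrier M. f (g y) = y))"

definition h_epi :: "('a, 'c) dil_group_scheme \<Rightarrow> ('b, 'd) dil_group_scheme \<Rightarrow> ('a \<Rightarrow> 'b) \<Rightarrow> bool" where
  "h_epi G M f \<longleftrightarrow> h_hom G M f \<and>
     (\<exists>g. h_hom M G g \<and> (\<forall>y\<in>carrier M. f (g y) = y))"

text \<open>Homogeneous subgroup: closed (hence embedded Lie), connected, simply connected
  subgroup invariant under all dilations.\<close>

definition homogeneous_subgroup :: "('a::euclidean_space) dil_group \<Rightarrow> 'a set \<Rightarrow> bool" where
  "homogeneous_subgroup G H \<longleftrightarrow> subgroup H G \<and> closed H \<and> connected H \<and>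
     simply_connected H \<and> (\<forall>r>0. dil G r ` H \<subseteq> H)"

definition complementary :: "('a, 'c) dil_group_scheme \<Rightarrow> 'a set \<Rightarrow> 'a set \<Rightarrow> bool" where
  "complementary G N H \<longleftrightarrow> N <#>\<^bsub>G\<^esub> H = carrier G \<and> N \<inter> H = {\<one>\<^bsub>G\<^esub>}"

end

theory Submission
  imports Defs
begin

locale graded_data =
  fixes G :: "('a::euclidean_space) dil_group" and \<iota> :: nat and V :: "nat \<Rightarrow> 'a set"
  assumes grp: "group G" and carr: "carrier G = UNIV"
    and smooth_mult: "smooth (\<lambda>(x, y). x \<otimes>\<^bsub>G\<^esub> y)"
    and sub: "\<forall>i\<in>{1..\<iota>}. subspace (V i)"
    and dec: "\<forall>x. \<exists>!v. (\<forall>i. (i \<in> {1..\<iota>} \<longrightarrow> v i \<in> V i) \<and> (i \<notin> {1..\<iota>} \<longrightarrow> v i = 0))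
                  \<and> x = (\<Sum>i=1..\<iota>. v i)"
    and dill: "\<forall>r>0. linear (dil G r) \<and> (\<forall>i\<in>{1..\<iota>}. \<forall>v\<in>V i. dil G r v = r ^ i *\<^sub>R v)"
    and dilhom: "\<forall>r>0. dil G r \<in> hom G G"

lemma graded_group_data: "graded_group G \<Longrightarrow> \<exists>\<iota> V. graded_data G \<iota> V"
  unfolding graded_group_def graded_data_def by blast

context graded_data
begin

definition isdec :: "'a \<Rightarrow> (nat \<Rightarrow> 'a) \<Rightarrow> bool" where
  "isdec x v \<longleftrightarrow> (\<forall>i. (i \<in> {1..\<iota>} \<longrightarrow> v i \<in> V i) \<and> (i \<notin> {1..\<iota>} \<longrightarrow> v i = 0))
                  \<and> x = (\<Sum>i=1..\<iota>. v i)"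

definition proj :: "nat \<Rightarrow> 'a \<Rightarrow> 'a" where
  "proj i x = (THE v. isdec x v) i"

lemma proj_isdec: "isdec x (\<lambda>i. proj i x)"
proof -
  have "\<exists>!v. isdec x v" using dec unfolding isdec_def by blast
  then have "isdec x (THE v. isdec x v)" by (rule theI')
  then show ?thesis unfolding proj_def by (simp add: eta_contract_eq)
qed

lemma isdec_unique: "isdec x v \<Longrightarrow> v i = proj i x"
proof -
  assume a: "isdec x v"
  have "\<exists>!v. isdec x v" using dec unfolding isdec_def by blast
  then have "v = (\<lambda>i. proj i x)" using a proj_isdec by blast
  then show ?thesis by simp
qed

lemma proj_in: "i \<in> {1..\<iota>} \<Longrightarrow> proj i x \<in> V i"
  using proj_isdec[of x] unfolding isdec_def by blast

lemma proj_out: "i \<notin> {1..\<iota>} \<Longrightarrow> proj i x = 0"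
  using proj_isdec[of x] unfolding isdec_def by blast

lemma proj_sum: "x = (\<Sum>i=1..\<iota>. proj i x)"
  using proj_isdec[of x] unfolding isdec_def by blast

lemma proj_linear: "linear (proj i)"
proof
  fix x y
  have "isdec (x + y) (\<lambda>i. proj i x + proj i y)"
    unfolding isdec_def
  proof (rule conjI, intro allI)
    fix i show "(i \<in> {1..\<iota>} \<longrightarrow> proj i x + proj i y \<in> V i) \<and> (i \<notin> {1..\<iota>} \<longrightarrow> proj i x + proj i y = 0)"
      using proj_in[of i x] proj_in[of i y] proj_out[of i x] proj_out[of i y] sub
        real_vector.subspace_add[of "V i" "proj i x" "proj i y"]
      by auto
    show "x + y = (\<Sum>i = 1..\<iota>. proj i x + proj i y)"
      by (subst proj_sum[of x], subst proj_sum[of y]) (simp add: sum.distrib)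
  qed
  then show "proj i (x + y) = proj i x + proj i y" by (rule isdec_unique[symmetric])
next
  fix c :: real and x
  have "isdec (c *\<^sub>R x) (\<lambda>i. c *\<^sub>R proj i x)"
    unfolding isdec_def
  proof (rule conjI, intro allI)
    fix i show "(i \<in> {1..\<iota>} \<longrightarrow> c *\<^sub>R proj i x \<in> V i) \<and> (i \<notin> {1..\<iota>} \<longrightarrow> c *\<^sub>R proj i x = 0)"
      using proj_in[of i x] proj_out[of i x] sub real_vector.subspace_scale[of "V i" "proj i x"]
      by auto
    show "c *\<^sub>R x = (\<Sum>i = 1..\<iota>. c *\<^sub>R proj i x)"
      by (subst proj_sum[of x]) (simp add: scaleR_sum_right)
  qed
  then show "proj i (c *\<^sub>R x) = c *\<^sub>R proj i x" by (rule isdec_unique[symmetric])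
qed

lemma proj_bl: "bounded_linear (proj i)"
  using proj_linear linear_conv_bounded_linear by blast

lemma dil_expand: "r > 0 \<Longrightarrow> dil G r x = (\<Sum>i=1..\<iota>. r ^ i *\<^sub>R proj i x)"
proof -
  assume r: "r > 0"
  have lin: "linear (dil G r)" using dill r by blast
  have "dil G r x = dil G r (\<Sum>i=1..\<iota>. proj i x)" by (subst proj_sum[of x]) simp
  also have "\<dots> = (\<Sum>i=1..\<iota>. dil G r (proj i x))" by (rule linear_sum[OF lin])
  also have "\<dots> = (\<Sum>i=1..\<iota>. r ^ i *\<^sub>R proj i x)"
    using dill r proj_in by (intro sum.cong) auto
  finally show ?thesis .
qed

lemma proj_dil: "r > 0 \<Longrightarrow> proj i (dil G r x) = r ^ i *\<^sub>R proj i x"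
proof -
  assume r: "r > 0"
  have "isdec (dil G r x) (\<lambda>i. r ^ i *\<^sub>R proj i x)"
    unfolding isdec_def
  proof (rule conjI, intro allI)
    fix i show "(i \<in> {1..\<iota>} \<longrightarrow> r ^ i *\<^sub>R proj i x \<in> V i) \<and> (i \<notin> {1..\<iota>} \<longrightarrow> r ^ i *\<^sub>R proj i x = 0)"
      using proj_in[of i x] proj_out[of i x] sub real_vector.subspace_scale[of "V i" "proj i x"]
      by auto
    show "dil G r x = (\<Sum>i = 1..\<iota>. r ^ i *\<^sub>R proj i x)" using dil_expand[OF r] .
  qed
  then show ?thesis by (rule isdec_unique[symmetric])
qed

lemma dil_comp: "r > 0 \<Longrightarrow> s > 0 \<Longrightarrow> dil G r (dil G s x) = dil G (r * s) x"
  using proj_dil dil_expand by (simp add: power_mult_distrib mult.commute)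

lemma dil_one: "dil G 1 x = x"
  using dil_expand[of 1 x] proj_sum[of x] by simp

lemma dil_inv: "r > 0 \<Longrightarrow> dil G r (dil G (1/r) x) = x"
  using dil_comp[of r "1/r" x] dil_one by simp

lemma proj_bound: "\<exists>C\<ge>0. \<forall>z. (\<Sum>i=1..\<iota>. norm (proj i z)) \<le> C * norm z"
proof -
  have "\<forall>i. \<exists>K>0. \<forall>z. norm (proj i z) \<le> norm z * K"
    using proj_bl bounded_linear.pos_bounded by blast
  then obtain K where K: "\<And>i. K i > 0" "\<And>i z. norm (proj i z) \<le> norm z * K i" by metis
  show ?thesis
  proof (intro exI conjI allI)
    show "0 \<le> (\<Sum>i=1..\<iota>. K i)" using K(1) by (simp add: sum_nonneg less_imp_le)
    fix z
    have "(\<Sum>i=1..\<iota>. norm (proj i z)) \<le> (\<Sum>i=1..\<iota>. norm z * K i)"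
      using K(2) by (rule sum_mono)
    also have "\<dots> = (\<Sum>i=1..\<iota>. K i) * norm z" by (simp add: sum_distrib_left mult.commute)
    finally show "(\<Sum>i=1..\<iota>. norm (proj i z)) \<le> (\<Sum>i=1..\<iota>. K i) * norm z" .
  qed
qed

lemma dil_bound: "\<exists>C\<ge>0. \<forall>r z. 0 < r \<longrightarrow> r \<le> 1 \<longrightarrow> norm (dil G r z) \<le> r * C * norm z"
proof -
  obtain C where C: "C \<ge> 0" "\<And>z. (\<Sum>i=1..\<iota>. norm (proj i z)) \<le> C * norm z"
    using proj_bound by blast
  show ?thesis
  proof (intro exI conjI allI impI)
    fix r :: real and z assume r: "0 < r" "r \<le> 1"
    have "norm (dil G r z) \<le> (\<Sum>i=1..\<iota>. norm (r ^ i *\<^sub>R proj i z))"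
      unfolding dil_expand[OF r(1)] by (rule norm_sum)
    also have "\<dots> \<le> (\<Sum>i=1..\<iota>. r * norm (proj i z))"
    proof (rule sum_mono)
      fix i assume i: "i \<in> {1..\<iota>}"
      have "r ^ i \<le> r ^ 1" using r i by (intro power_decreasing) auto
      then show "norm (r ^ i *\<^sub>R proj i z) \<le> r * norm (proj i z)"
        using r by (simp add: mult_right_mono)
    qed
    also have "\<dots> = r * (\<Sum>i=1..\<iota>. norm (proj i z))" by (simp add: sum_distrib_left)
    also have "\<dots> \<le> r * (C * norm z)" using C(2) r by (simp add: mult_left_mono)
    finally show "norm (dil G r z) \<le> r * C * norm z" by (simp add: mult.assoc)
  qed (rule C(1))
qed

lemma dil_inv_bound: "\<exists>C\<ge>0. \<forall>r z. 0 < r \<longrightarrow> r \<le> 1 \<longrightarrow> norm (dil G (1/r) z) \<le> C / r ^ \<iota> * norm z"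
proof -
  obtain C where C: "C \<ge> 0" "\<And>z. (\<Sum>i=1..\<iota>. norm (proj i z)) \<le> C * norm z"
    using proj_bound by blast
  show ?thesis
  proof (intro exI conjI allI impI)
    fix r :: real and z assume r: "0 < r" "r \<le> 1"
    have r1: "1/r > 0" using r by simp
    have "norm (dil G (1/r) z) \<le> (\<Sum>i=1..\<iota>. norm ((1/r) ^ i *\<^sub>R proj i z))"
      unfolding dil_expand[OF r1] by (rule norm_sum)
    also have "\<dots> \<le> (\<Sum>i=1..\<iota>. (1/r) ^ \<iota> * norm (proj i z))"
    proof (rule sum_mono)
      fix i assume i: "i \<in> {1..\<iota>}"
      have "(1/r) ^ i \<le> (1/r) ^ \<iota>" using r i by (intro power_increasing) auto
      then show "norm ((1/r) ^ i *\<^sub>R proj i z) \<le> (1/r) ^ \<iota> * norm (proj i z)"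
        using r by (simp add: mult_right_mono)
    qed
    also have "\<dots> = (1/r) ^ \<iota> * (\<Sum>i=1..\<iota>. norm (proj i z))" by (simp add: sum_distrib_left)
    also have "\<dots> \<le> (1/r) ^ \<iota> * (C * norm z)" using C(2) r by (simp add: mult_left_mono)
    finally show "norm (dil G (1/r) z) \<le> C / r ^ \<iota> * norm z" by (simp add: power_one_over)
  qed (rule C(1))
qed

lemma one_zero: "\<one>\<^bsub>G\<^esub> = 0"
proof -
  obtain C where C: "C \<ge> 0" "\<And>r z. 0 < r \<Longrightarrow> r \<le> 1 \<Longrightarrow> norm (dil G r z) \<le> r * C * norm z"
    using dil_bound by blast
  define r where "r = 1 / (2 * C + 2)"
  have r: "0 < r" "r \<le> 1" "r * C < 1" using C(1) unfolding r_def by (auto simp: field_simps)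
  have "dil G r \<in> hom G G" using dilhom r by blast
  then have "dil G r \<one>\<^bsub>G\<^esub> = \<one>\<^bsub>G\<^esub>" using grp by (simp add: hom_one)
  then have "norm \<one>\<^bsub>G\<^esub> \<le> (r * C) * norm \<one>\<^bsub>G\<^esub>" using C(2)[OF r(1,2), of "\<one>\<^bsub>G\<^esub>"] by simp
  then have "norm \<one>\<^bsub>G\<^esub> \<le> 0" using r(3)
    by (smt (verit) mult_less_cancel_right2 norm_ge_zero)
  then show ?thesis by simp
qed

end

context graded_data
begin

lemma mult_cont: "continuous_on UNIV (\<lambda>(x, y). x \<otimes>\<^bsub>G\<^esub> y)"
  using smooth_mult unfolding smooth_def by (metis Ck.simps(1))

lemma mult_cont2:
  assumes "continuous_on UNIV g" "continuous_on UNIV h"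
  shows "continuous_on UNIV (\<lambda>x. g x \<otimes>\<^bsub>G\<^esub> h x)"
proof -
  have "continuous_on UNIV (\<lambda>x. (\<lambda>(x, y). x \<otimes>\<^bsub>G\<^esub> y) (g x, h x))"
    by (rule continuous_on_compose2[OF mult_cont]) (auto intro: continuous_on_Pair assms)
  then show ?thesis by simp
qed

lemma r_one0: "x \<otimes>\<^bsub>G\<^esub> 0 = x"
  using monoid.r_one[OF group.is_monoid[OF grp], of x] carr one_zero by simp

lemma l_one0: "0 \<otimes>\<^bsub>G\<^esub> x = x"
  using monoid.l_one[OF group.is_monoid[OF grp], of x] carr one_zero by simp

lemma mult_deriv: "((\<lambda>(x, y). x \<otimes>\<^bsub>G\<^esub> y) has_derivative (\<lambda>p. fst p + snd p)) (at (0, 0))"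
proof -
  define m where "m = (\<lambda>(x, y). x \<otimes>\<^bsub>G\<^esub> y)"
  have "Ck (Suc 0) m" using smooth_mult unfolding smooth_def m_def by blast
  then have "m differentiable (at (0, 0))" by simp
  then obtain D where D: "(m has_derivative D) (at (0, 0))" unfolding differentiable_def by blast
  have bl: "bounded_linear D" using D by (rule has_derivative_bounded_linear)
  have d1: "((\<lambda>x. m (x, 0)) has_derivative (\<lambda>h. D (h, 0))) (at 0)"
  proof -
    have P: "((\<lambda>x. (x, 0)) has_derivative (\<lambda>h. (h, 0))) (at (0::'a))"
      by (rule has_derivative_Pair[OF has_derivative_ident has_derivative_const])
    have D': "(m has_derivative D) (at ((\<lambda>x. (x, 0::'a)) 0))" using D by simp
    show ?thesis using has_derivative_compose[OF P D'] by simp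
  qed
  have "(\<lambda>x. m (x, 0)) = (\<lambda>x. x)" unfolding m_def by (simp add: r_one0)
  then have e1: "(\<lambda>h. D (h, 0)) = (\<lambda>h. h)"
    using d1 has_derivative_ident has_derivative_unique by metis
  have d2: "((\<lambda>x. m (0, x)) has_derivative (\<lambda>h. D (0, h))) (at 0)"
  proof -
    have P: "((\<lambda>x. (0, x)) has_derivative (\<lambda>h. (0, h))) (at (0::'a))"
      by (rule has_derivative_Pair[OF has_derivative_const has_derivative_ident])
    have D': "(m has_derivative D) (at ((\<lambda>x. (0::'a, x)) 0))" using D by simp
    show ?thesis using has_derivative_compose[OF P D'] by simp
  qed
  have "(\<lambda>x. m (0, x)) = (\<lambda>x. x)" unfolding m_def by (simp add: l_one0)
  then have e2: "(\<lambda>h. D (0, h)) = (\<lambda>h. h)"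
    using d2 has_derivative_ident has_derivative_unique by metis
  have "D = (\<lambda>p. fst p + snd p)"
  proof
    fix p :: "'a \<times> 'a"
    have "p = (fst p, 0) + (0, snd p)" by simp
    then have "D p = D (fst p, 0) + D (0, snd p)" by (metis bl linear_add bounded_linear.linear)
    then show "D p = fst p + snd p" using e1 e2 by metis
  qed
  then show ?thesis using D unfolding m_def by simp
qed

end

definition phi :: "('a \<times> 'a \<Rightarrow> 'a) \<Rightarrow> ('a \<Rightarrow> 'a) list \<Rightarrow> 'a \<Rightarrow> 'a::real_normed_vector" where
  "phi m fs x = foldr (\<lambda>u acc. m (u x, acc)) fs 0"

lemma phi_Nil [simp]: "phi m [] x = 0" by (simp add: phi_def)
lemma phi_Cons [simp]: "phi m (u # fs) x = m (u x, phi m fs x)" by (simp add: phi_def)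

lemma phi_cont:
  assumes m: "continuous_on UNIV m" and u: "\<forall>u\<in>set fs. continuous_on UNIV u"
  shows "continuous_on UNIV (phi m fs)"
  using u
proof (induction fs)
  case Nil then show ?case by simp
next
  case (Cons u fs)
  have "continuous_on UNIV (\<lambda>x. m (u x, phi m fs x))"
  proof (rule continuous_on_compose2[OF m])
    show "continuous_on UNIV (\<lambda>x. (u x, phi m fs x))"
      by (rule continuous_on_Pair) (use Cons in auto)
  qed auto
  then show ?case by simp
qed

lemma phi_deriv:
  fixes m :: "'a \<times> 'a \<Rightarrow> 'a::euclidean_space"
  assumes m: "(m has_derivative (\<lambda>p. fst p + snd p)) (at (0, 0))" and m0: "m (0, 0) = 0"
    and u: "\<forall>u\<in>set fs. linear u"
  shows "(phi m fs has_derivative (\<lambda>h. sum_list (map (\<lambda>u. u h) fs))) (at 0) \<and> phi m fs 0 = 0"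
  using u
proof (induction fs)
  case Nil then show ?case by (simp add: has_derivative_const)
next
  case (Cons u fs)
  have lu: "linear u" using Cons by simp
  then have du: "(u has_derivative u) (at 0)"
    by (simp add: bounded_linear_imp_has_derivative linear_conv_bounded_linear)
  have u0: "u 0 = 0" using lu by (rule linear_0)
  have IH: "(phi m fs has_derivative (\<lambda>h. sum_list (map (\<lambda>u. u h) fs))) (at 0)" "phi m fs 0 = 0"
    using Cons by auto
  have P: "((\<lambda>x. (u x, phi m fs x)) has_derivative (\<lambda>h. (u h, sum_list (map (\<lambda>u. u h) fs)))) (at 0)"
    by (rule has_derivative_Pair[OF du IH(1)])
  have m': "(m has_derivative (\<lambda>p. fst p + snd p)) (at (u 0, phi m fs 0))"
    using m u0 IH(2) by simp
  have "((\<lambda>x. m (u x, phi m fs x)) has_derivative (\<lambda>h. u h + sum_list (map (\<lambda>u. u h) fs))) (at 0)"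
    using has_derivative_compose[OF P m'] by simp
  then show ?case using u0 IH(2) m0 by simp
qed


locale hh = G: graded_data G \<iota>G VG + M: graded_data M \<iota>M VM
  for G :: "('a::euclidean_space) dil_group" and \<iota>G VG
    and M :: "('b::euclidean_space) dil_group" and \<iota>M VM +
  fixes f :: "'a \<Rightarrow> 'b"
  assumes fh: "h_hom G M f"
begin

lemma fhom: "f \<in> hom G M" using fh unfolding h_hom_def by blast

lemma f0: "f 0 = 0"
  using hom_one[OF fhom G.grp M.grp] G.one_zero M.one_zero by simp

lemma fmult: "f (x \<otimes>\<^bsub>G\<^esub> y) = f x \<otimes>\<^bsub>M\<^esub> f y"
  using hom_mult[OF fhom] G.carr by simp

lemma fdil: "r > 0 \<Longrightarrow> f (dil G r x) = dil M r (f x)"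
  using fh G.carr unfolding h_hom_def by blast

lemma seg_bound:
  assumes i: "i \<in> {1..\<iota>G}" and v: "v \<in> VG i"
  shows "\<exists>K. \<forall>s. \<bar>s\<bar> \<le> 1 \<longrightarrow> norm (f (s *\<^sub>R v)) \<le> K"
proof -
  obtain CM where CM: "CM \<ge> 0" "\<And>r z. 0 < r \<Longrightarrow> r \<le> 1 \<Longrightarrow> norm (dil M r z) \<le> r * CM * norm z"
    using M.dil_bound by blast
  have i0: "0 < i" using i by simp
  have aux: "norm (f (s *\<^sub>R w)) \<le> CM * norm (f w)" if w: "w \<in> VG i" and s: "0 < s" "s \<le> 1" for w s
  proof -
    define \<rho> where "\<rho> = root i s"
    have \<rho>: "0 < \<rho>" "\<rho> \<le> 1" "\<rho> ^ i = s" using i0 s unfolding \<rho>_def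
      by (auto simp: real_root_gt_zero)
    have "dil G \<rho> w = \<rho> ^ i *\<^sub>R w" using G.dill \<rho>(1) i w by blast
    then have "s *\<^sub>R w = dil G \<rho> w" using \<rho>(3) by simp
    then have "f (s *\<^sub>R w) = dil M \<rho> (f w)" using fdil \<rho>(1) by simp
    then have "norm (f (s *\<^sub>R w)) \<le> \<rho> * CM * norm (f w)" using CM(2) \<rho> by simp
    also have "\<dots> \<le> 1 * CM * norm (f w)" using \<rho> CM(1) by (intro mult_right_mono) auto
    finally show ?thesis by simp
  qed
  have nv: "- v \<in> VG i" using G.sub i v real_vector.subspace_neg by blast
  show ?thesis
  proof (intro exI allI impI)
    fix s :: real assume s: "\<bar>s\<bar> \<le> 1"
    have K0: "0 \<le> CM * (norm (f v) + norm (f (- v)))" using CM(1) by simp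
    consider "s > 0" | "s = 0" | "s < 0" by linarith
    then show "norm (f (s *\<^sub>R v)) \<le> CM * (norm (f v) + norm (f (- v)))"
    proof cases
      case 1
      then have "norm (f (s *\<^sub>R v)) \<le> CM * norm (f v)" using aux[OF v] s by simp
      also have "\<dots> \<le> CM * (norm (f v) + norm (f (- v)))" using CM(1) by (simp add: mult_left_mono)
      finally show ?thesis .
    next
      case 2 then show ?thesis using K0 f0 by simp
    next
      case 3
      have "s *\<^sub>R v = (- s) *\<^sub>R (- v)" by simp
      then have "norm (f (s *\<^sub>R v)) \<le> CM * norm (f (- v))" using aux[OF nv, of "- s"] s 3 by simp
      also have "\<dots> \<le> CM * (norm (f v) + norm (f (- v)))" using CM(1) by (simp add: mult_left_mono)
      finally show ?thesis .
    qed
  qed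
qed

lemma prod_bound_M: "\<exists>C. \<forall>a b. norm a \<le> K \<longrightarrow> norm b \<le> B \<longrightarrow> norm (a \<otimes>\<^bsub>M\<^esub> b) \<le> C"
proof -
  have "compact ((\<lambda>(x, y). x \<otimes>\<^bsub>M\<^esub> y) ` (cball 0 K \<times> cball 0 B))"
    by (rule compact_continuous_image[OF continuous_on_subset[OF M.mult_cont]])
       (auto intro: compact_Times)
  then have "bounded ((\<lambda>(x, y). x \<otimes>\<^bsub>M\<^esub> y) ` (cball 0 K \<times> cball 0 B))"
    by (rule compact_imp_bounded)
  then obtain C where "\<forall>z\<in>(\<lambda>(x, y). x \<otimes>\<^bsub>M\<^esub> y) ` (cball 0 K \<times> cball 0 B). norm z \<le> C"
    unfolding bounded_iff by blast
  then show ?thesis by force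
qed

lemma phi_bound:
  assumes "\<forall>u\<in>set ls. \<exists>K. \<forall>x\<in>S. norm (f (u x)) \<le> K"
  shows "\<exists>B. \<forall>x\<in>S. norm (f (phi (\<lambda>(x, y). x \<otimes>\<^bsub>G\<^esub> y) ls x)) \<le> B"
  using assms
proof (induction ls)
  case Nil then show ?case using f0 by auto
next
  case (Cons u ls)
  obtain K where K: "\<forall>x\<in>S. norm (f (u x)) \<le> K" using Cons.prems by auto
  obtain B where B: "\<forall>x\<in>S. norm (f (phi (\<lambda>(x, y). x \<otimes>\<^bsub>G\<^esub> y) ls x)) \<le> B" using Cons by auto
  obtain C where C: "\<forall>a b. norm a \<le> K \<longrightarrow> norm b \<le> B \<longrightarrow> norm (a \<otimes>\<^bsub>M\<^esub> b) \<le> C"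
    using prod_bound_M by blast
  show ?case
  proof (intro exI ballI)
    fix x assume x: "x \<in> S"
    show "norm (f (phi (\<lambda>(x, y). x \<otimes>\<^bsub>G\<^esub> y) (u # ls) x)) \<le> C"
      using C K B x by (simp add: fmult)
  qed
qed

lemma local_bound: "\<exists>\<epsilon>>0. \<exists>K. \<forall>x. norm x < \<epsilon> \<longrightarrow> norm (f x) \<le> K"
proof -
  obtain ps :: "('a \<times> nat) list" where ps: "set ps = Basis \<times> {1..\<iota>G}" "distinct ps"
    using finite_distinct_list[of "Basis \<times> {1..\<iota>G}"] by auto
  define fs where "fs = map (\<lambda>(e, i) x. (x \<bullet> e) *\<^sub>R G.proj i e) ps"
  define m where "m = (\<lambda>(x, y). x \<otimes>\<^bsub>G\<^esub> y)"
  have lin: "\<forall>u\<in>set fs. linear u"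
    unfolding fs_def by (auto simp: linear_iff inner_add_left scaleR_add_left)
  have cont: "\<forall>u\<in>set fs. continuous_on UNIV u"
    unfolding fs_def by (auto intro!: continuous_intros)
  have sumid: "sum_list (map (\<lambda>u. u h) fs) = h" for h
  proof -
    have "sum_list (map (\<lambda>u. u h) fs) = sum_list (map (\<lambda>(e, i). (h \<bullet> e) *\<^sub>R G.proj i e) ps)"
      unfolding fs_def by (simp add: comp_def case_prod_unfold)
    also have "\<dots> = (\<Sum>(e, i)\<in>Basis \<times> {1..\<iota>G}. (h \<bullet> e) *\<^sub>R G.proj i e)"
      using ps by (simp add: sum_list_distinct_conv_sum_set)
    also have "\<dots> = (\<Sum>e\<in>Basis. \<Sum>i=1..\<iota>G. (h \<bullet> e) *\<^sub>R G.proj i e)"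
      by (simp add: sum.cartesian_product)
    also have "\<dots> = (\<Sum>e\<in>Basis. (h \<bullet> e) *\<^sub>R e)"
      by (intro sum.cong refl) (metis G.proj_sum scaleR_sum_right)
    also have "\<dots> = h" by (rule euclidean_representation)
    finally show ?thesis .
  qed
  have m0: "m (0, 0) = 0" unfolding m_def using G.r_one0 by simp
  have dphi: "(phi m fs has_derivative (\<lambda>h. h)) (at 0)" and phi0: "phi m fs 0 = 0"
    using phi_deriv[OF G.mult_deriv[folded m_def] m0 lin] sumid by auto
  have cphi: "continuous_on UNIV (phi m fs)"
    using phi_cont[OF G.mult_cont[folded m_def] cont] .
  have "phi m fs 0 \<in> interior (phi m fs ` ball 0 1)"
    by (rule sussmann_open_mapping[OF open_UNIV cphi _ dphi, of id]) (auto simp: id_def bounded_linear_ident)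
  then obtain \<epsilon> where \<epsilon>: "\<epsilon> > 0" "ball 0 \<epsilon> \<subseteq> phi m fs ` ball 0 1"
    using phi0 mem_interior by metis
  have ub: "\<forall>u\<in>set fs. \<exists>K. \<forall>x\<in>ball 0 1. norm (f (u x)) \<le> K"
  proof
    fix u assume "u \<in> set fs"
    then obtain e i where ei: "(e, i) \<in> set ps" "u = (\<lambda>x. (x \<bullet> e) *\<^sub>R G.proj i e)"
      unfolding fs_def by auto
    have e: "e \<in> Basis" and i: "i \<in> {1..\<iota>G}" using ei ps by auto
    obtain K where K: "\<forall>s. \<bar>s\<bar> \<le> 1 \<longrightarrow> norm (f (s *\<^sub>R G.proj i e)) \<le> K"
      using seg_bound[OF i G.proj_in[OF i]] by blast
    show "\<exists>K. \<forall>x\<in>ball 0 1. norm (f (u x)) \<le> K"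
    proof (intro exI ballI)
      fix x :: 'a assume x: "x \<in> ball 0 1"
      have "\<bar>x \<bullet> e\<bar> \<le> norm x * norm e" by (rule Cauchy_Schwarz_ineq2)
      then have "\<bar>x \<bullet> e\<bar> \<le> 1" using x e by simp
      then show "norm (f (u x)) \<le> K" using K ei by simp
    qed
  qed
  obtain B where B: "\<forall>x\<in>ball 0 1. norm (f (phi m fs x)) \<le> B"
    using phi_bound[OF ub] unfolding m_def by blast
  show ?thesis
  proof (intro exI conjI allI impI)
    show "\<epsilon> > 0" by fact
    fix x :: 'a assume "norm x < \<epsilon>"
    then have "x \<in> phi m fs ` ball 0 1" using \<epsilon> by auto
    then show "norm (f x) \<le> B" using B by auto
  qed
qed


lemma cont0: "\<forall>\<eta>>0. \<exists>\<delta>>0. \<forall>x. norm x < \<delta> \<longrightarrow> norm (f x) < \<eta>"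
proof (intro allI impI)
  fix \<eta> :: real assume \<eta>: "\<eta> > 0"
  obtain \<epsilon> K where \<epsilon>: "\<epsilon> > 0" and K: "\<And>x. norm x < \<epsilon> \<Longrightarrow> norm (f x) \<le> K"
    using local_bound by blast
  have K0: "K \<ge> 0" using K[of 0] \<epsilon> f0 by simp
  obtain CM where CM: "CM \<ge> 0" "\<And>r z. 0 < r \<Longrightarrow> r \<le> 1 \<Longrightarrow> norm (dil M r z) \<le> r * CM * norm z"
    using M.dil_bound by blast
  obtain CG where CG: "CG \<ge> 0" "\<And>r z. 0 < r \<Longrightarrow> r \<le> 1 \<Longrightarrow> norm (dil G (1/r) z) \<le> CG / r ^ \<iota>G * norm z"
    using G.dil_inv_bound by blast
  define r where "r = min 1 (\<eta> / (CM * K + 1))"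
  have CMK: "CM * K \<ge> 0" using CM(1) K0 by simp
  have r: "0 < r" "r \<le> 1" "r \<le> \<eta> / (CM * K + 1)" unfolding r_def using \<eta> CMK by auto
  define \<delta> where "\<delta> = \<epsilon> * r ^ \<iota>G / (CG + 1)"
  have \<delta>: "\<delta> > 0" unfolding \<delta>_def using \<epsilon> r CG by simp
  show "\<exists>\<delta>>0. \<forall>x. norm x < \<delta> \<longrightarrow> norm (f x) < \<eta>"
  proof (intro exI conjI allI impI)
    show "\<delta> > 0" by fact
    fix x :: 'a assume x: "norm x < \<delta>"
    define y where "y = dil G (1/r) x"
    have rp: "r ^ \<iota>G > 0" using r by simp
    have "norm y \<le> CG / r ^ \<iota>G * norm x" unfolding y_def using CG(2) r by blast
    also have "\<dots> \<le> CG / r ^ \<iota>G * \<delta>" using x CG(1) rp by (intro mult_left_mono) auto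
    also have "\<dots> = CG / (CG + 1) * \<epsilon>" unfolding \<delta>_def using rp CG(1) r(1) by (simp add: field_simps)
    also have "\<dots> < \<epsilon>" using CG(1) \<epsilon> by (simp add: field_simps)
    finally have ny: "norm y < \<epsilon>" .
    have "x = dil G r y" unfolding y_def using G.dil_inv r by simp
    then have "f x = dil M r (f y)" using fdil r by simp
    then have "norm (f x) \<le> r * CM * norm (f y)" using CM(2) r by simp
    also have "\<dots> \<le> r * (CM * K)" using K[OF ny] r CM(1) by (simp add: mult_left_mono mult.assoc)
    also have "\<dots> \<le> \<eta> / (CM * K + 1) * (CM * K)" using r CMK by (intro mult_right_mono) auto
    also have "\<dots> < \<eta>" using \<eta> CMK by (simp add: field_simps)
    finally show "norm (f x) < \<eta>" .
  qed
qed

lemma f_cont: "continuous_on UNIV f"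
proof -
  have c0: "isCont f 0"
    unfolding isCont_def LIM_eq using cont0 f0 by (simp, blast)
  have "isCont f x" for x
  proof -
    define xi where "xi = inv\<^bsub>G\<^esub> x"
    have xi: "xi \<otimes>\<^bsub>G\<^esub> x = 0" unfolding xi_def
      using group.l_inv[OF G.grp, of x] G.carr G.one_zero by simp
    have eq: "f = (\<lambda>y. f x \<otimes>\<^bsub>M\<^esub> f (xi \<otimes>\<^bsub>G\<^esub> y))"
    proof
      fix y
      have "x \<otimes>\<^bsub>G\<^esub> (xi \<otimes>\<^bsub>G\<^esub> y) = y"
        unfolding xi_def using G.carr G.grp
        by (metis UNIV_I group.inv_solve_left)
      then show "f y = f x \<otimes>\<^bsub>M\<^esub> f (xi \<otimes>\<^bsub>G\<^esub> y)" using fmult by metis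
    qed
    have c1: "isCont (\<lambda>y. xi \<otimes>\<^bsub>G\<^esub> y) x"
      using G.mult_cont2[OF continuous_on_const continuous_on_id]
      by (simp add: continuous_on_eq_continuous_at)
    have c2: "isCont (\<lambda>y. f (xi \<otimes>\<^bsub>G\<^esub> y)) x"
      by (rule isCont_o2[OF c1]) (simp add: xi c0)
    have c3: "isCont (\<lambda>z. f x \<otimes>\<^bsub>M\<^esub> z) w" for w
      using M.mult_cont2[OF continuous_on_const continuous_on_id]
      by (simp add: continuous_on_eq_continuous_at)
    have "isCont (\<lambda>y. f x \<otimes>\<^bsub>M\<^esub> f (xi \<otimes>\<^bsub>G\<^esub> y)) x"
      by (rule isCont_o2[OF c2 c3])
    then show ?thesis using eq by metis
  qed
  then show ?thesis by (simp add: continuous_at_imp_continuous_on)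
qed

end

lemma h_hom_continuous:
  fixes G :: "('a::euclidean_space) dil_group" and M :: "('b::euclidean_space) dil_group"
  assumes "graded_group G" "graded_group M" "h_hom G M f"
  shows "continuous_on UNIV f"
proof -
  obtain \<iota>G VG where g: "graded_data G \<iota>G VG" using graded_group_data[OF assms(1)] by blast
  obtain \<iota>M VM where m: "graded_data M \<iota>M VM" using graded_group_data[OF assms(2)] by blast
  interpret hh G \<iota>G VG M \<iota>M VM f
    by (intro hh.intro g m hh_axioms.intro assms(3))
  show ?thesis by (rule f_cont)
qed

theorem proposition7p17:
  fixes G :: "('a::euclidean_space) dil_group" and M :: "('b::euclidean_space) dil_group"
    and L :: "'a \<Rightarrow> 'b"
  assumes "graded_group G" and "graded_group M"
    and "h_hom G M L" and "L ` carrier G = carrier M"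
  shows "((\<exists>H. homogeneous_subgroup G H \<and> complementary G (kernel G M L) H)
            \<longleftrightarrow> h_epi G M L) \<and>
         (\<forall>H. homogeneous_subgroup G H \<and> complementary G (kernel G M L) H
              \<longrightarrow> h_iso (G\<lparr>carrier := H\<rparr>) M L)"
proof -
  have gG: "group G" and cG: "carrier G = UNIV" using assms(1) unfolding graded_group_def by auto
  have gM: "group M" and cM: "carrier M = UNIV" using assms(2) unfolding graded_group_def by auto
  have Lhom: "L \<in> hom G M" using assms(3) unfolding h_hom_def by blast
  have Ldil: "\<And>r x. r > 0 \<Longrightarrow> L (dil G r x) = dil M r (L x)"
    using assms(3) cG unfolding h_hom_def by blast
  interpret GH: group_hom G M L using gG gM Lhom by (simp add: group_hom_def group_hom_axioms_def)
  have Lmult: "\<And>x y. L (x \<otimes>\<^bsub>G\<^esub> y) = L x \<otimes>\<^bsub>M\<^esub> L y" using cG by simp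
  have Linv: "\<And>x. L (inv\<^bsub>G\<^esub> x) = inv\<^bsub>M\<^esub> (L x)" using cG by simp
  define N where "N = kernel G M L"
  have N: "\<And>x. x \<in> N \<longleftrightarrow> L x = \<one>\<^bsub>M\<^esub>" unfolding N_def kernel_def using cG by simp
  have part1: "h_iso (G\<lparr>carrier := H\<rparr>) M L \<and> h_epi G M L"
    if H: "homogeneous_subgroup G H" "complementary G N H" for H
  proof -
    have sH: "subgroup H G" and dH: "\<And>r. r > 0 \<Longrightarrow> dil G r ` H \<subseteq> H"
      using H(1) unfolding homogeneous_subgroup_def by auto
    have NH: "N <#>\<^bsub>G\<^esub> H = carrier G" "N \<inter> H = {\<one>\<^bsub>G\<^esub>}"
      using H(2) unfolding complementary_def by auto
    have surj: "\<exists>h\<in>H. L h = y" for y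
    proof -
      obtain x where "y = L x" using assms(4) cG cM by (metis UNIV_I surj_def)
      moreover have "x \<in> N <#>\<^bsub>G\<^esub> H" using NH cG by simp
      then obtain n h where nh: "n \<in> N" "h \<in> H" "x = n \<otimes>\<^bsub>G\<^esub> h"
        unfolding set_mult_def by auto
      ultimately have "y = L n \<otimes>\<^bsub>M\<^esub> L h" using Lmult by simp
      also have "\<dots> = L h" using N nh cM by simp
      finally show ?thesis using nh by auto
    qed
    have inj: "h1 = h2" if "h1 \<in> H" "h2 \<in> H" "L h1 = L h2" for h1 h2
    proof -
      have "inv\<^bsub>G\<^esub> h1 \<otimes>\<^bsub>G\<^esub> h2 \<in> H" using that sH
        by (simp add: subgroup.m_closed subgroup.m_inv_closed)
      moreover have "L (inv\<^bsub>G\<^esub> h1 \<otimes>\<^bsub>G\<^esub> h2) = \<one>\<^bsub>M\<^esub>"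
        using that Lmult Linv cM gM by (simp add: group.l_inv)
      ultimately have "inv\<^bsub>G\<^esub> h1 \<otimes>\<^bsub>G\<^esub> h2 = \<one>\<^bsub>G\<^esub>" using NH(2) N by blast
      then show ?thesis using gG cG by (metis UNIV_I group.inv_equality group.inv_inv group.inv_closed)
    qed
    define g where "g y = (THE h. h \<in> H \<and> L h = y)" for y
    have g: "g y \<in> H \<and> L (g y) = y" for y
    proof -
      have "\<exists>!h. h \<in> H \<and> L h = y" using surj inj by blast
      then show ?thesis unfolding g_def by (rule theI')
    qed
    have gL: "g (L h) = h" if "h \<in> H" for h using g inj that by blast
    have gmult: "g (a \<otimes>\<^bsub>M\<^esub> b) = g a \<otimes>\<^bsub>G\<^esub> g b" for a b
    proof -
      have "g a \<otimes>\<^bsub>G\<^esub> g b \<in> H" using g sH by (simp add: subgroup.m_closed)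
      moreover have "L (g a \<otimes>\<^bsub>G\<^esub> g b) = a \<otimes>\<^bsub>M\<^esub> b" using g Lmult by simp
      ultimately show ?thesis using gL by metis
    qed
    have gdil: "g (dil M r y) = dil G r (g y)" if r: "r > 0" for r y
    proof -
      have "dil G r (g y) \<in> H" using dH[OF r] g by blast
      moreover have "L (dil G r (g y)) = dil M r y" using Ldil[OF r] g by simp
      ultimately show ?thesis using gL by metis
    qed
    have ghom: "g \<in> hom M G" unfolding hom_def using gmult cG by auto
    have ghomH: "g \<in> hom M (G\<lparr>carrier := H\<rparr>)" unfolding hom_def using gmult g by auto
    have LhomH: "L \<in> hom (G\<lparr>carrier := H\<rparr>) M" unfolding hom_def using Lmult cM by auto
    have "h_iso (G\<lparr>carrier := H\<rparr>) M L"
      unfolding h_iso_def h_hom_def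
    proof (intro conjI exI)
      show "L \<in> hom (G\<lparr>carrier := H\<rparr>) M" by (rule LhomH)
      show "\<forall>r>0. \<forall>x\<in>carrier (G\<lparr>carrier := H\<rparr>). L (dil (G\<lparr>carrier := H\<rparr>) r x) = dil M r (L x)"
        using Ldil by simp
      show "g \<in> hom M (G\<lparr>carrier := H\<rparr>)" by (rule ghomH)
      show "\<forall>r>0. \<forall>x\<in>carrier M. g (dil M r x) = dil (G\<lparr>carrier := H\<rparr>) r (g x)"
        using gdil by simp
      show "\<forall>x\<in>carrier (G\<lparr>carrier := H\<rparr>). g (L x) = x" using gL by simp
      show "\<forall>y\<in>carrier M. L (g y) = y" using g by simp
    qed
    moreover have "h_epi G M L"
      unfolding h_epi_def
    proof (intro conjI exI)
      show "h_hom G M L" by (rule assms(3))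
      show "h_hom M G g" unfolding h_hom_def using ghom gdil by simp
      show "\<forall>y\<in>carrier M. L (g y) = y" using g by simp
    qed
    ultimately show ?thesis by blast
  qed
  have part2: "\<exists>H. homogeneous_subgroup G H \<and> complementary G N H" if e: "h_epi G M L"
  proof -
    obtain g where gh: "h_hom M G g" and Lg: "\<And>y. L (g y) = y"
      using e cM unfolding h_epi_def by auto
    have ghom: "g \<in> hom M G" and gdil: "\<And>r y. r > 0 \<Longrightarrow> g (dil M r y) = dil G r (g y)"
      using gh cM unfolding h_hom_def by auto
    interpret gH: group_hom M G g using gG gM ghom by (simp add: group_hom_def group_hom_axioms_def)
    have gmult: "\<And>x y. g (x \<otimes>\<^bsub>M\<^esub> y) = g x \<otimes>\<^bsub>G\<^esub> g y" using cM by simp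
    have g1: "g \<one>\<^bsub>M\<^esub> = \<one>\<^bsub>G\<^esub>" by simp
    have contL: "continuous_on UNIV L" by (rule h_hom_continuous[OF assms(1,2,3)])
    have contg: "continuous_on UNIV g" by (rule h_hom_continuous[OF assms(2,1) gh])
    define H where "H = range g"
    have Heq: "H = {x. g (L x) = x}" unfolding H_def using Lg by auto (metis rangeI)
    have sub: "subgroup H G" unfolding H_def using gH.img_is_subgroup cM by simp
    have closed: "closed H" unfolding Heq
      by (rule closed_Collect_eq[OF continuous_on_compose[OF contL continuous_on_subset[OF contg], simplified comp_def] continuous_on_id]) auto
    have conn: "connected H" unfolding H_def
      by (rule connected_continuous_image[OF contg connected_UNIV])
    have hom: "H homeomorphic (UNIV :: 'b set)"
      unfolding homeomorphic_def homeomorphism_def H_def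
    proof (rule exI[of _ L], rule exI[of _ g], intro conjI)
      show "L ` range g = UNIV" by (simp add: image_image Lg)
      show "continuous_on (range g) L" using continuous_on_subset[OF contL] by blast
    qed (auto simp: Lg contg)
    have sc: "simply_connected H"
      using homeomorphic_simply_connected[OF homeomorphic_sym[THEN iffD1, OF hom]]
        convex_imp_simply_connected[OF convex_UNIV] by blast
    have dinv: "\<forall>r>0. dil G r ` H \<subseteq> H" unfolding H_def using gdil by (auto, metis rangeI)
    have hs: "homogeneous_subgroup G H"
      unfolding homogeneous_subgroup_def using sub closed conn sc dinv by blast
    have c1: "N <#>\<^bsub>G\<^esub> H = carrier G"
    proof
      show "N <#>\<^bsub>G\<^esub> H \<subseteq> carrier G" using cG by simp
      show "carrier G \<subseteq> N <#>\<^bsub>G\<^esub> H"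
      proof
        fix x
        define n where "n = x \<otimes>\<^bsub>G\<^esub> inv\<^bsub>G\<^esub> (g (L x))"
        have "L n = \<one>\<^bsub>M\<^esub>" unfolding n_def using Lmult Linv Lg cM gM by (simp add: group.r_inv)
        then have "n \<in> N" using N by simp
        moreover have "g (L x) \<in> H" unfolding H_def by simp
        moreover have "x = n \<otimes>\<^bsub>G\<^esub> g (L x)"
        proof -
          interpret Gg: group G by (rule gG)
          show ?thesis unfolding n_def by (simp add: cG monoid.m_assoc[OF group.is_monoid[OF gG]] group.l_inv[OF gG] monoid.r_one[OF group.is_monoid[OF gG]] group.inv_closed[OF gG])
        qed
        ultimately show "x \<in> N <#>\<^bsub>G\<^esub> H" unfolding set_mult_def by blast
      qed
    qed
    have c2: "N \<inter> H = {\<one>\<^bsub>G\<^esub>}"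
    proof
      show "N \<inter> H \<subseteq> {\<one>\<^bsub>G\<^esub>}"
      proof
        fix x assume x: "x \<in> N \<inter> H"
        then obtain y where y: "x = g y" unfolding H_def by auto
        then have "y = \<one>\<^bsub>M\<^esub>" using x N Lg by simp
        then show "x \<in> {\<one>\<^bsub>G\<^esub>}" using y g1 by simp
      qed
      show "{\<one>\<^bsub>G\<^esub>} \<subseteq> N \<inter> H" using N g1 unfolding H_def by (auto, metis rangeI)
    qed
    show ?thesis using hs c1 c2 unfolding complementary_def by blast
  qed
  show ?thesis using part1 part2 unfolding N_def[symmetric] by blast
qed

end
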